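(* Suppose that (i) for every $j=1,\dots,J$, $\eta\mapsto h_j(Z_j,\theta_0,\eta)$, $\mathbf B\to L^2(Z_j)$, is Fréchet differentiable in a neighborhood of $\eta_0$ with derivative $b\mapsto S^{(j)}_{\theta_0,\eta_0}b$; (ii) for all $j$ there is a function $\nu_j$, known up to $(\theta_0,\eta_0)$, with $[S^{(j)}_{\theta_0,\eta_0}b](Z_j)=E[\nu_j(Y,\theta_0,\eta_0,b)\mid Z_j]$ for all $b\in\mathbf B$, and $\nu_j(Y,\theta_0,\eta_0,b)=b(V)'\tilde\nu_j(Y,\theta_0,\eta_0)$ for some $d_\eta$-vector $\tilde\nu_j$ of functions known up to $(\theta_0,\eta_0)$. Let $\langle b_1,b_2\rangle_{\mathbf B}=E[b_1(V)'b_2(V)]$. Then the adjoint $S^*_{\theta_0,\eta_0}:L^2(Z)\to\mathbf B$ of $S_{\theta_0,\eta_0}b=(S^{(1)}_{\theta_0,\eta_0}b,\dots,S^{(J)}_{\theta_0,\eta_0}b)$ exists, is linear and continuous, and is given by $[S^*_{\theta_0,\eta_0}g](V)=\sum_{j=1}^JE[\tilde\nu_j(Y,\theta_0,\eta_0)g_j(Z_j)\mid V]$ for $g=(g_1,\dots,g_J)\in L^2(Z)$.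
   Context: $W=(Y,V,Z)$ is a random vector; $Z$ collects the distinct elements of conditioning vectors $Z_1,\dots,Z_J$. $\eta\in\mathbf B\subseteq\bigotimes^{d_\eta}L^2(V)$, a Hilbert space; $\theta\in\Theta\subset\mathbb R^{d_\theta}$. Residual functions $m_j(Y,\theta,\eta)$ satisfy $E[m_j(Y,\theta_0,\eta_0)\mid Z_j]=0$ a.s., and $h_j(Z_j,\theta,\eta)=E[m_j(Y,\theta,\eta)\mid Z_j]$. $L^2(Z)=\bigotimes_{j=1}^JL^2(Z_j)$ with inner product $\langle f,g\rangle_{L^2(Z)}=\sum_jE[f_j(Z_j)g_j(Z_j)]$. The adjoint satisfies $\langle S b,g\rangle_{L^2(Z)}=\langle b,S^*g\rangle_{\mathbf B}$. *)

theory Defs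
  imports "HOL-Probability.Probability"
begin

definition sigma_gen :: "'a measure \<Rightarrow> ('a \<Rightarrow> 'b) \<Rightarrow> 'b measure \<Rightarrow> 'a measure" where
  "sigma_gen M X N = vimage_algebra (space M) X N"

definition cond_exp_given :: "'a measure \<Rightarrow> ('a \<Rightarrow> 'b) \<Rightarrow> 'b measure \<Rightarrow> ('a \<Rightarrow> real) \<Rightarrow> 'a \<Rightarrow> real" where
  "cond_exp_given M X N f = real_cond_exp M (sigma_gen M X N) f"

definition L2_of :: "'a measure \<Rightarrow> ('a \<Rightarrow> 'b) \<Rightarrow> 'b measure \<Rightarrow> ('b \<Rightarrow> 'c::euclidean_space) \<Rightarrow> bool" where
  "L2_of M X N f \<longleftrightarrow> f \<in> borel_measurable N \<and> integrable M (\<lambda>\<omega>. (norm (f (X \<omega>)))\<^sup>2)"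

definition L2_norm_of :: "'a measure \<Rightarrow> ('a \<Rightarrow> 'b) \<Rightarrow> ('b \<Rightarrow> 'c::euclidean_space) \<Rightarrow> real" where
  "L2_norm_of M X f = sqrt (\<integral>\<omega>. (norm (f (X \<omega>)))\<^sup>2 \<partial>M)"

definition bounded_linear_L2 ::
  "'a measure \<Rightarrow> ('a \<Rightarrow> 'v) \<Rightarrow> 'v measure \<Rightarrow> ('a \<Rightarrow> 'z) \<Rightarrow> 'z measure
   \<Rightarrow> (('v \<Rightarrow> real^'d) \<Rightarrow> ('z \<Rightarrow> real)) \<Rightarrow> bool" where
  "bounded_linear_L2 M V MV Z MZ D \<longleftrightarrow>
     (\<forall>b. L2_of M V MV b \<longrightarrow> L2_of M Z MZ (D b)) \<and>
     (\<forall>b1 b2 (a::real) c. L2_of M V MV b1 \<longrightarrow> L2_of M V MV b2 \<longrightarrow>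
        (AE \<omega> in M. D (\<lambda>v. a *\<^sub>R b1 v + c *\<^sub>R b2 v) (Z \<omega>) = a * D b1 (Z \<omega>) + c * D b2 (Z \<omega>))) \<and>
     (\<exists>C. \<forall>b. L2_of M V MV b \<longrightarrow> L2_norm_of M Z (D b) \<le> C * L2_norm_of M V b)"

definition frechet_L2 ::
  "'a measure \<Rightarrow> ('a \<Rightarrow> 'v) \<Rightarrow> 'v measure \<Rightarrow> ('a \<Rightarrow> 'z) \<Rightarrow> 'z measure
   \<Rightarrow> (('v \<Rightarrow> real^'d) \<Rightarrow> ('z \<Rightarrow> real)) \<Rightarrow> ('v \<Rightarrow> real^'d)
   \<Rightarrow> (('v \<Rightarrow> real^'d) \<Rightarrow> ('z \<Rightarrow> real)) \<Rightarrow> bool" where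
  "frechet_L2 M V MV Z MZ h \<eta> D \<longleftrightarrow>
     bounded_linear_L2 M V MV Z MZ D \<and>
     (\<forall>\<epsilon>>0. \<exists>\<delta>>0. \<forall>b. L2_of M V MV b \<longrightarrow> L2_norm_of M V b < \<delta> \<longrightarrow>
        L2_norm_of M Z (\<lambda>z. h (\<lambda>v. \<eta> v + b v) z - h \<eta> z - D b z) \<le> \<epsilon> * L2_norm_of M V b)"

end

theory Submission
  imports Defs
begin

lemma factor_nonneg:
  fixes u :: "'a \<Rightarrow> real"
  assumes "u \<in> borel_measurable (vimage_algebra X V N)" "\<And>x. 0 \<le> u x" "V \<in> X \<rightarrow> space N"
  shows "\<exists>\<phi>\<in>borel_measurable N. \<forall>x\<in>X. u x = \<phi> (V x)"
  using assms(1,2)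
proof (induction u rule: borel_measurable_induct_real)
  case (set A)
  then obtain B where "B \<in> sets N" "A = V -` B \<inter> X" using sets_vimage_algebra2[OF assms(3)] by auto
  then show ?case
  proof (intro bexI[of _ "indicator B"] ballI)
    fix x assume "x \<in> X" then show "indicator A x = (indicator B (V x) :: real)"
      using \<open>A = V -` B \<inter> X\<close> by (simp add: indicator_def)
  qed (use \<open>B \<in> sets N\<close> in simp)
next
  case (mult u c)
  from \<open>\<exists>\<phi>\<in>borel_measurable N. \<forall>x\<in>X. u x = \<phi> (V x)\<close>
  obtain \<phi> where p: "\<phi> \<in> borel_measurable N" "\<forall>x\<in>X. u x = \<phi> (V x)" by blast
  show ?case
  proof (intro bexI[of _ "\<lambda>v. c * \<phi> v"] ballI)
    show "(\<lambda>v. c * \<phi> v) \<in> borel_measurable N" using p(1) by measurable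
  qed (use p(2) in simp)
next
  case (add u v)
  from \<open>\<exists>\<phi>\<in>borel_measurable N. \<forall>x\<in>X. u x = \<phi> (V x)\<close>
  obtain \<phi> where p: "\<phi> \<in> borel_measurable N" "\<forall>x\<in>X. u x = \<phi> (V x)" by blast
  from \<open>\<exists>\<phi>\<in>borel_measurable N. \<forall>x\<in>X. v x = \<phi> (V x)\<close>
  obtain \<psi> where q: "\<psi> \<in> borel_measurable N" "\<forall>x\<in>X. v x = \<psi> (V x)" by blast
  show ?case
  proof (intro bexI[of _ "\<lambda>y. \<psi> y + \<phi> y"] ballI)
    show "(\<lambda>y. \<psi> y + \<phi> y) \<in> borel_measurable N" using p(1) q(1) by measurable
  qed (use p(2) q(2) in simp)
next
  case (seq U)
  from \<open>\<And>i. \<exists>\<phi>\<in>borel_measurable N. \<forall>x\<in>X. U i x = \<phi> (V x)\<close>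
  have "\<forall>i. \<exists>\<phi>. \<phi> \<in> borel_measurable N \<and> (\<forall>x\<in>X. U i x = \<phi> (V x))" by blast
  from choice[OF this] obtain \<phi> where \<phi>0: "\<forall>i. \<phi> i \<in> borel_measurable N \<and> (\<forall>x\<in>X. U i x = \<phi> i (V x))"
    by blast
  have \<phi>1: "\<And>i. \<phi> i \<in> borel_measurable N" and \<phi>2: "\<And>i x. x\<in>X \<Longrightarrow> U i x = \<phi> i (V x)"
    using \<phi>0 by blast+
  show ?case
  proof (intro bexI[of _ "\<lambda>v. lim (\<lambda>i. \<phi> i v)"] ballI)
    fix x assume x: "x \<in> X"
    have "(\<lambda>i. U i x) \<longlonglongrightarrow> u x" using seq(4)[of x] x by simp
    then have "(\<lambda>i. \<phi> i (V x)) \<longlonglongrightarrow> u x" using \<phi>2[OF x] by simp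
    then show "u x = lim (\<lambda>i. \<phi> i (V x))" by (simp add: limI)
  next
    show "(\<lambda>v. lim (\<lambda>i. \<phi> i v)) \<in> borel_measurable N"
      by (rule borel_measurable_lim_metric) (rule \<phi>1)
  qed
qed

lemma factor_real:
  fixes f :: "'a \<Rightarrow> real"
  assumes "f \<in> borel_measurable (vimage_algebra X V N)" "V \<in> X \<rightarrow> space N"
  shows "\<exists>\<phi>\<in>borel_measurable N. \<forall>x\<in>X. f x = \<phi> (V x)"
proof -
  have m1: "(\<lambda>x. max (f x) 0) \<in> borel_measurable (vimage_algebra X V N)"
    and m2: "(\<lambda>x. max (- f x) 0) \<in> borel_measurable (vimage_algebra X V N)"
    using assms(1) by measurable
  have "\<exists>\<phi>\<in>borel_measurable N. \<forall>x\<in>X. max (f x) 0 = \<phi> (V x)"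
    by (rule factor_nonneg[OF m1 _ assms(2)]) simp
  then obtain \<phi> where \<phi>: "\<phi> \<in> borel_measurable N" "\<forall>x\<in>X. max (f x) 0 = \<phi> (V x)" by blast
  have "\<exists>\<phi>\<in>borel_measurable N. \<forall>x\<in>X. max (- f x) 0 = \<phi> (V x)"
    by (rule factor_nonneg[OF m2 _ assms(2)]) simp
  then obtain \<psi> where \<psi>: "\<psi> \<in> borel_measurable N" "\<forall>x\<in>X. max (- f x) 0 = \<psi> (V x)" by blast
  show ?thesis
  proof (intro bexI[of _ "\<lambda>v. \<phi> v - \<psi> v"] ballI)
    fix x assume "x \<in> X"
    then have "\<phi> (V x) = max (f x) 0" "\<psi> (V x) = max (- f x) 0" using \<phi> \<psi> by auto
    then show "f x = \<phi> (V x) - \<psi> (V x)" by linarith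
  next
    show "(\<lambda>v. \<phi> v - \<psi> v) \<in> borel_measurable N" using \<phi>(1) \<psi>(1) by measurable
  qed
qed

lemma sqrt_bound_aux:
  fixes P A B :: real
  assumes t: "\<And>t. t > 0 \<Longrightarrow> 2 * P \<le> t * A + B / t" and A: "A \<ge> 0" and B: "B \<ge> 0"
  shows "P \<le> sqrt A * sqrt B"
proof (cases "A > 0 \<and> B > 0")
  case True
  then have sA: "sqrt A > 0" and sB: "sqrt B > 0" by auto
  have tp: "sqrt B / sqrt A > 0" using sA sB by simp
  have h: "2 * P \<le> (sqrt B / sqrt A) * A + B / (sqrt B / sqrt A)" by (rule t[OF tp])
  have eA: "A = sqrt A * sqrt A" and eB: "B = sqrt B * sqrt B" using A B by simp_all
  have e1: "(sqrt B / sqrt A) * (sqrt A * sqrt A) = sqrt A * sqrt B" using sA by (simp add: field_simps)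
  have e2: "(sqrt B * sqrt B) / (sqrt B / sqrt A) = sqrt A * sqrt B" using sA sB by (simp add: field_simps)
  have "(sqrt B / sqrt A) * A + B / (sqrt B / sqrt A) = 2 * (sqrt A * sqrt B)"
    using e1 e2 eA eB by simp
  then show ?thesis using h by simp
next
  case False
  show ?thesis
  proof (rule ccontr)
    assume "\<not> P \<le> sqrt A * sqrt B"
    then have P: "P > 0" using False A B by auto
    show False
    proof (cases "A = 0")
      case True
      have tpos: "(B + 1) / P > 0" using P B by simp
      have "2 * P \<le> B / ((B + 1) / P)" using t[OF tpos] True by simp
      also have "\<dots> = B * P / (B + 1)" by simp
      also have "\<dots> < P" using P B by (simp add: field_simps)
      finally show False using P by simp
    next
      case False
      then have B0: "B = 0" using \<open>\<not> (A > 0 \<and> B > 0)\<close> A B by auto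
      have tpos: "P / (A + 1) > 0" using P A by simp
      have "2 * P \<le> P / (A + 1) * A" using t[OF tpos] B0 by simp
      also have "\<dots> < P" using P A by (simp add: field_simps)
      finally show False using P by simp
    qed
  qed
qed

lemma prod_le_sq: "(a::real) * b \<le> a\<^sup>2 + b\<^sup>2"
proof -
  have "0 \<le> (a - b)\<^sup>2" by simp
  then have "0 \<le> a * a - 2 * (a * b) + b * b" by (simp add: power2_eq_square algebra_simps)
  moreover have "0 \<le> a * a" "0 \<le> b * b" by simp_all
  ultimately have "a * b \<le> a * a + b * b" by linarith
  then show ?thesis by (simp add: power2_eq_square)
qed

lemma cs_real:
  fixes f g :: "'a \<Rightarrow> real"
  assumes [measurable]: "f \<in> borel_measurable M" "g \<in> borel_measurable M"
    and f2: "integrable M (\<lambda>x. (f x)\<^sup>2)" and g2: "integrable M (\<lambda>x. (g x)\<^sup>2)"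
  shows "integrable M (\<lambda>x. f x * g x)"
    and "\<bar>\<integral>x. f x * g x \<partial>M\<bar> \<le> sqrt (\<integral>x. (f x)\<^sup>2 \<partial>M) * sqrt (\<integral>x. (g x)\<^sup>2 \<partial>M)"
proof -
  have sum_int: "integrable M (\<lambda>x. (f x)\<^sup>2 + (g x)\<^sup>2)" using f2 g2 by simp
  have pt: "\<bar>f x * g x\<bar> \<le> (f x)\<^sup>2 + (g x)\<^sup>2" for x
    using prod_le_sq[of "\<bar>f x\<bar>" "\<bar>g x\<bar>"] by (simp add: abs_mult)
  show fg: "integrable M (\<lambda>x. f x * g x)"
    by (rule Bochner_Integration.integrable_bound[OF sum_int]) (use pt in auto)
  have afg: "integrable M (\<lambda>x. \<bar>f x * g x\<bar>)" using fg by simp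
  have key: "2 * (\<integral>x. \<bar>f x * g x\<bar> \<partial>M) \<le> t * (\<integral>x. (f x)\<^sup>2 \<partial>M) + (\<integral>x. (g x)\<^sup>2 \<partial>M) / t"
    if t: "t > 0" for t
  proof -
    have pw: "2 * \<bar>f x * g x\<bar> \<le> t * (f x)\<^sup>2 + (g x)\<^sup>2 / t" for x
    proof -
      have "0 \<le> (t * \<bar>f x\<bar> - \<bar>g x\<bar>)\<^sup>2 / t" using t by simp
      also have "(t * \<bar>f x\<bar> - \<bar>g x\<bar>)\<^sup>2 / t = t * (f x)\<^sup>2 + (g x)\<^sup>2 / t - 2 * \<bar>f x * g x\<bar>"
        using t by (simp add: field_simps power2_eq_square abs_mult)
      finally show ?thesis by simp
    qed
    have "2 * (\<integral>x. \<bar>f x * g x\<bar> \<partial>M) = (\<integral>x. 2 * \<bar>f x * g x\<bar> \<partial>M)" by simp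
    also have "\<dots> \<le> (\<integral>x. t * (f x)\<^sup>2 + (g x)\<^sup>2 / t \<partial>M)"
      by (rule integral_mono) (use afg f2 g2 pw in auto)
    also have "\<dots> = t * (\<integral>x. (f x)\<^sup>2 \<partial>M) + (\<integral>x. (g x)\<^sup>2 \<partial>M) / t"
      using f2 g2 by simp
    finally show ?thesis .
  qed
  have "(\<integral>x. \<bar>f x * g x\<bar> \<partial>M) \<le> sqrt (\<integral>x. (f x)\<^sup>2 \<partial>M) * sqrt (\<integral>x. (g x)\<^sup>2 \<partial>M)"
    by (rule sqrt_bound_aux[OF key]) (auto intro!: integral_nonneg_AE)
  moreover have "\<bar>\<integral>x. f x * g x \<partial>M\<bar> \<le> (\<integral>x. \<bar>f x * g x\<bar> \<partial>M)"
    by (rule integral_abs_bound)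
  ultimately show "\<bar>\<integral>x. f x * g x \<partial>M\<bar> \<le> sqrt (\<integral>x. (f x)\<^sup>2 \<partial>M) * sqrt (\<integral>x. (g x)\<^sup>2 \<partial>M)"
    by linarith
qed

lemma int_bdd_mult:
  fixes f h :: "'a \<Rightarrow> real"
  assumes f: "integrable M f" and h: "h \<in> borel_measurable M" and K: "\<And>x. \<bar>h x\<bar> \<le> K"
  shows "integrable M (\<lambda>x. h x * f x)"
proof (rule Bochner_Integration.integrable_bound[OF integrable_mult_right[OF f, of K]])
  show "(\<lambda>x. h x * f x) \<in> borel_measurable M" using h borel_measurable_integrable[OF f] by measurable
  show "AE x in M. norm (h x * f x) \<le> norm (K * f x)"
  proof (rule AE_I2)
    fix x
    have "\<bar>h x\<bar> * \<bar>f x\<bar> \<le> K * \<bar>f x\<bar>" using K[of x] by (simp add: mult_right_mono)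
    also have "\<dots> \<le> \<bar>K\<bar> * \<bar>f x\<bar>" by (simp add: mult_right_mono)
    finally show "norm (h x * f x) \<le> norm (K * f x)" by (simp add: abs_mult)
  qed
qed

lemma L2_prod_int:
  fixes f :: "'b \<Rightarrow> 'c::euclidean_space" and g :: "'e \<Rightarrow> 'c"
  assumes f: "L2_of M X N f" and g: "L2_of M X' N' g" and X: "X \<in> M \<rightarrow>\<^sub>M N" and X': "X' \<in> M \<rightarrow>\<^sub>M N'"
  shows "integrable M (\<lambda>\<omega>. f (X \<omega>) \<bullet> g (X' \<omega>))"
proof -
  have fm: "f \<in> borel_measurable N" and gm: "g \<in> borel_measurable N'"
    and fi: "integrable M (\<lambda>\<omega>. (norm (f (X \<omega>)))\<^sup>2)" and gi: "integrable M (\<lambda>\<omega>. (norm (g (X' \<omega>)))\<^sup>2)"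
    using f g unfolding L2_of_def by auto
  have pt: "\<bar>x \<bullet> y\<bar> \<le> (norm x)\<^sup>2 + (norm y)\<^sup>2" for x y :: 'c
  proof -
    have "\<bar>x \<bullet> y\<bar> \<le> norm x * norm y" by (rule Cauchy_Schwarz_ineq2)
    also have "\<dots> \<le> (norm x)\<^sup>2 + (norm y)\<^sup>2" by (rule prod_le_sq)
    finally show ?thesis .
  qed
  show ?thesis
  proof (rule Bochner_Integration.integrable_bound[OF Bochner_Integration.integrable_add[OF fi gi]])
    show "(\<lambda>\<omega>. f (X \<omega>) \<bullet> g (X' \<omega>)) \<in> borel_measurable M"
      using measurable_comp[OF X fm] measurable_comp[OF X' gm] by (simp add: o_def)
    show "AE x in M. norm (f (X x) \<bullet> g (X' x)) \<le> norm ((norm (f (X x)))\<^sup>2 + (norm (g (X' x)))\<^sup>2)"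
      using pt by auto
  qed
qed

lemma vec_nth_meas:
  fixes f :: "'b \<Rightarrow> real^'d"
  assumes "f \<in> borel_measurable N"
  shows "(\<lambda>x. f x $ k) \<in> borel_measurable N"
proof -
  have c: "(\<lambda>x::real^'d. x $ k) \<in> borel_measurable borel"
    by (rule borel_measurable_continuous_onI[OF linear_continuous_on[OF bounded_linear_vec_nth]])
  from measurable_comp[OF assms c] show ?thesis by (simp add: o_def)
qed

lemma sf_sub:
  assumes prob: "prob_space M" and X: "X \<in> M \<rightarrow>\<^sub>M N"
  shows "sigma_finite_subalgebra M (sigma_gen M X N)"
proof (rule finite_measure_subalgebra_is_sigma_finite)
  interpret prob_space M by (rule prob)
  show "finite_measure_subalgebra M (sigma_gen M X N)"
    unfolding finite_measure_subalgebra_def finite_measure_subalgebra_axioms_def subalgebra_def sigma_gen_def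
    using sets_image_in_sets[of M "space M" X N] X finite_measure_axioms by simp
qed

lemma meas_sub:
  assumes X: "X \<in> M \<rightarrow>\<^sub>M N" and f: "f \<in> borel_measurable N"
  shows "(\<lambda>\<omega>. f (X \<omega>)) \<in> borel_measurable (sigma_gen M X N)"
proof -
  have "X \<in> sigma_gen M X N \<rightarrow>\<^sub>M N"
    unfolding sigma_gen_def by (rule measurable_vimage_algebra1) (use measurable_space[OF X] in blast)
  from measurable_comp[OF this f] show ?thesis by (simp add: o_def)
qed

lemma L2_bounded:
  fixes b :: "'v \<Rightarrow> 'c::euclidean_space"
  assumes prob: "prob_space M" and V: "V \<in> M \<rightarrow>\<^sub>M MV" and bm: "b \<in> borel_measurable MV"
    and K: "\<And>v. norm (b v) \<le> K"
  shows "L2_of M V MV b"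
proof -
  interpret prob_space M by (rule prob)
  have m: "(\<lambda>\<omega>. (norm (b (V \<omega>)))\<^sup>2) \<in> borel_measurable M"
    using measurable_comp[OF V bm] by (simp add: o_def)
  have "integrable M (\<lambda>\<omega>. (norm (b (V \<omega>)))\<^sup>2)"
  proof (rule integrable_const_bound[where B="K\<^sup>2"])
    show "AE x in M. norm ((norm (b (V x)))\<^sup>2) \<le> K\<^sup>2"
      using K by (auto intro!: power_mono)
  qed (rule m)
  then show ?thesis unfolding L2_of_def using bm by simp
qed

locale adjj =
  fixes M :: "'a measure"
    and Y :: "'a \<Rightarrow> 'y" and MY :: "'y measure"
    and V :: "'a \<Rightarrow> 'v" and MV :: "'v measure"
    and Zj :: "'a \<Rightarrow> 'z" and MZ :: "'z measure"
    and S :: "('v \<Rightarrow> real^'d) \<Rightarrow> ('z \<Rightarrow> real)"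
    and \<nu> :: "'y \<Rightarrow> real^'d"
  assumes prob: "prob_space M"
    and Y_meas: "Y \<in> M \<rightarrow>\<^sub>M MY"
    and V_meas: "V \<in> M \<rightarrow>\<^sub>M MV"
    and Z_meas: "Zj \<in> M \<rightarrow>\<^sub>M MZ"
    and S_bl: "bounded_linear_L2 M V MV Zj MZ S"
    and \<nu>_meas: "\<nu> \<in> borel_measurable MY"
    and \<nu>_b_int: "\<And>b. L2_of M V MV b \<Longrightarrow> integrable M (\<lambda>\<omega>. b (V \<omega>) \<bullet> \<nu> (Y \<omega>))"
    and \<nu>_g_int: "\<And>g k. L2_of M Zj MZ g \<Longrightarrow> integrable M (\<lambda>\<omega>. \<nu> (Y \<omega>) $ k * g (Zj \<omega>))"
    and S_cond: "\<And>b. L2_of M V MV b \<Longrightarrow>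
              AE \<omega> in M. S b (Zj \<omega>) = cond_exp_given M Zj MZ (\<lambda>\<omega>'. b (V \<omega>') \<bullet> \<nu> (Y \<omega>')) \<omega>"
begin

lemma S_L2: "L2_of M V MV b \<Longrightarrow> L2_of M Zj MZ (S b)"
  using S_bl unfolding bounded_linear_L2_def by blast

lemma stepA:
  fixes b \<phi> :: "'v \<Rightarrow> real^'d" and g :: "'z \<Rightarrow> real"
  assumes b: "L2_of M V MV b" and bnd: "\<And>v. norm (b v) \<le> K" and g: "L2_of M Zj MZ g"
    and \<phi>m: "\<phi> \<in> borel_measurable MV"
    and \<phi>: "AE \<omega> in M. \<forall>k. \<phi> (V \<omega>) $ k = cond_exp_given M V MV (\<lambda>\<omega>'. \<nu> (Y \<omega>') $ k * g (Zj \<omega>')) \<omega>"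
  shows "(\<integral>\<omega>. S b (Zj \<omega>) * g (Zj \<omega>) \<partial>M) = (\<integral>\<omega>. b (V \<omega>) \<bullet> \<phi> (V \<omega>) \<partial>M)"
proof -
  interpret FV: sigma_finite_subalgebra M "sigma_gen M V MV" by (rule sf_sub[OF prob V_meas])
  interpret FZ: sigma_finite_subalgebra M "sigma_gen M Zj MZ" by (rule sf_sub[OF prob Z_meas])
  have bm: "b \<in> borel_measurable MV" and gm: "g \<in> borel_measurable MZ"
    using b g unfolding L2_of_def by auto
  have Sbm: "S b \<in> borel_measurable MZ" using S_L2[OF b] unfolding L2_of_def by auto
  have [measurable]: "(\<lambda>\<omega>. b (V \<omega>)) \<in> borel_measurable M" using measurable_comp[OF V_meas bm] by (simp add: o_def)
  have [measurable]: "(\<lambda>\<omega>. \<phi> (V \<omega>)) \<in> borel_measurable M" using measurable_comp[OF V_meas \<phi>m] by (simp add: o_def)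
  have [measurable]: "(\<lambda>\<omega>. g (Zj \<omega>)) \<in> borel_measurable M" using measurable_comp[OF Z_meas gm] by (simp add: o_def)
  have [measurable]: "(\<lambda>\<omega>. S b (Zj \<omega>)) \<in> borel_measurable M" using measurable_comp[OF Z_meas Sbm] by (simp add: o_def)
  have [measurable]: "(\<lambda>\<omega>. \<nu> (Y \<omega>)) \<in> borel_measurable M" using measurable_comp[OF Y_meas \<nu>_meas] by (simp add: o_def)
  have [measurable]: "(\<lambda>\<omega>. b (V \<omega>) $ k) \<in> borel_measurable M" for k
    by (rule vec_nth_meas) measurable
  have [measurable]: "(\<lambda>\<omega>. \<phi> (V \<omega>) $ k) \<in> borel_measurable M" for k
    by (rule vec_nth_meas) measurable
  have [measurable]: "(\<lambda>\<omega>. \<nu> (Y \<omega>) $ k) \<in> borel_measurable M" for k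
    by (rule vec_nth_meas) measurable
  define bn where "bn = (\<lambda>\<omega>. b (V \<omega>) \<bullet> \<nu> (Y \<omega>))"
  have bn_m [measurable]: "bn \<in> borel_measurable M" unfolding bn_def by measurable
  have bk_bnd: "\<bar>b v $ k\<bar> \<le> K" for v k
    using component_le_norm_cart[of "b v" k] bnd[of v] by linarith
  have gZF [measurable]: "(\<lambda>\<omega>. g (Zj \<omega>)) \<in> borel_measurable (sigma_gen M Zj MZ)"
    by (rule meas_sub[OF Z_meas gm])
  have bkF: "(\<lambda>\<omega>. b (V \<omega>) $ k) \<in> borel_measurable (sigma_gen M V MV)" for k
    by (rule meas_sub[OF V_meas, of "\<lambda>v. b v $ k", simplified]) (rule vec_nth_meas[OF bm])
  have decomp: "g (Zj \<omega>) * bn \<omega> = (\<Sum>k\<in>UNIV. b (V \<omega>) $ k * (\<nu> (Y \<omega>) $ k * g (Zj \<omega>)))" for \<omega>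
    unfolding bn_def inner_vec_def by (simp add: sum_distrib_left algebra_simps)
  have term_int: "integrable M (\<lambda>\<omega>. b (V \<omega>) $ k * (\<nu> (Y \<omega>) $ k * g (Zj \<omega>)))" for k
    by (rule int_bdd_mult[OF \<nu>_g_int[OF g]]) (use bk_bnd in auto)
  have gbn_int: "integrable M (\<lambda>\<omega>. g (Zj \<omega>) * bn \<omega>)"
    unfolding decomp using term_int by simp
  have cexp_int: "integrable M (\<lambda>\<omega>. b (V \<omega>) $ k * real_cond_exp M (sigma_gen M V MV) (\<lambda>\<omega>. \<nu> (Y \<omega>) $ k * g (Zj \<omega>)) \<omega>)"
    and cexp_eq: "(\<integral>\<omega>. b (V \<omega>) $ k * real_cond_exp M (sigma_gen M V MV) (\<lambda>\<omega>. \<nu> (Y \<omega>) $ k * g (Zj \<omega>)) \<omega> \<partial>M)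
       = (\<integral>\<omega>. b (V \<omega>) $ k * (\<nu> (Y \<omega>) $ k * g (Zj \<omega>)) \<partial>M)" for k
    using FV.real_cond_exp_intg[OF term_int bkF] by auto
  have phik: "AE \<omega> in M. b (V \<omega>) $ k * \<phi> (V \<omega>) $ k = b (V \<omega>) $ k * real_cond_exp M (sigma_gen M V MV) (\<lambda>\<omega>. \<nu> (Y \<omega>) $ k * g (Zj \<omega>)) \<omega>" for k
    using \<phi> unfolding cond_exp_given_def by eventually_elim simp
  have phik_int: "integrable M (\<lambda>\<omega>. b (V \<omega>) $ k * \<phi> (V \<omega>) $ k)" for k
  proof (rule integrable_cong_AE_imp[OF cexp_int])
    show "AE \<omega> in M. b (V \<omega>) $ k * real_cond_exp M (sigma_gen M V MV) (\<lambda>\<omega>. \<nu> (Y \<omega>) $ k * g (Zj \<omega>)) \<omega> = b (V \<omega>) $ k * \<phi> (V \<omega>) $ k"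
      using phik[of k] by (rule AE_mp) (rule AE_I2, rule impI, rule sym)
  qed measurable

  have "(\<integral>\<omega>. S b (Zj \<omega>) * g (Zj \<omega>) \<partial>M) = (\<integral>\<omega>. g (Zj \<omega>) * real_cond_exp M (sigma_gen M Zj MZ) bn \<omega> \<partial>M)"
  proof (rule integral_cong_AE)
    show "AE \<omega> in M. S b (Zj \<omega>) * g (Zj \<omega>) = g (Zj \<omega>) * real_cond_exp M (sigma_gen M Zj MZ) bn \<omega>"
      using S_cond[OF b] unfolding cond_exp_given_def bn_def by eventually_elim simp
  qed simp_all
  also have "\<dots> = (\<integral>\<omega>. g (Zj \<omega>) * bn \<omega> \<partial>M)"
    by (rule FZ.real_cond_exp_intg(2)[OF gbn_int gZF bn_m])
  also have "\<dots> = (\<Sum>k\<in>UNIV. (\<integral>\<omega>. b (V \<omega>) $ k * (\<nu> (Y \<omega>) $ k * g (Zj \<omega>)) \<partial>M))"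
    unfolding decomp by (rule Bochner_Integration.integral_sum) (rule term_int)
  also have "\<dots> = (\<Sum>k\<in>UNIV. (\<integral>\<omega>. b (V \<omega>) $ k * \<phi> (V \<omega>) $ k \<partial>M))"
  proof (rule sum.cong[OF refl])
    fix k
    have "(\<integral>\<omega>. b (V \<omega>) $ k * \<phi> (V \<omega>) $ k \<partial>M) = (\<integral>\<omega>. b (V \<omega>) $ k * real_cond_exp M (sigma_gen M V MV) (\<lambda>\<omega>. \<nu> (Y \<omega>) $ k * g (Zj \<omega>)) \<omega> \<partial>M)"
      by (rule integral_cong_AE[OF _ _ phik]) measurable
    then show "(\<integral>\<omega>. b (V \<omega>) $ k * (\<nu> (Y \<omega>) $ k * g (Zj \<omega>)) \<partial>M) = (\<integral>\<omega>. b (V \<omega>) $ k * \<phi> (V \<omega>) $ k \<partial>M)"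
      using cexp_eq[of k] by simp
  qed
  also have "\<dots> = (\<integral>\<omega>. (\<Sum>k\<in>UNIV. b (V \<omega>) $ k * \<phi> (V \<omega>) $ k) \<partial>M)"
    by (rule Bochner_Integration.integral_sum[symmetric]) (rule phik_int)
  also have "\<dots> = (\<integral>\<omega>. b (V \<omega>) \<bullet> \<phi> (V \<omega>) \<partial>M)"
    unfolding inner_vec_def by simp
  finally show ?thesis .
qed

end

lemma L2_norm_nonneg: "L2_norm_of M X f \<ge> 0"
  unfolding L2_norm_of_def by (auto intro!: integral_nonneg_AE)

context adjj
begin

lemma S_bound: "\<exists>C\<ge>0. \<forall>b::'v \<Rightarrow> real^'d. L2_of M V MV b \<longrightarrow> L2_norm_of M Zj (S b) \<le> C * L2_norm_of M V b"
proof -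
  obtain C where C: "\<forall>b::'v \<Rightarrow> real^'d. L2_of M V MV b \<longrightarrow> L2_norm_of M Zj (S b) \<le> C * L2_norm_of M V b"
    using S_bl unfolding bounded_linear_L2_def by blast
  have "\<forall>b::'v \<Rightarrow> real^'d. L2_of M V MV b \<longrightarrow> L2_norm_of M Zj (S b) \<le> max C 0 * L2_norm_of M V b"
  proof (intro allI impI)
    fix b :: "'v \<Rightarrow> real^'d" assume "L2_of M V MV b"
    then have "L2_norm_of M Zj (S b) \<le> C * L2_norm_of M V b" using C by blast
    also have "\<dots> \<le> max C 0 * L2_norm_of M V b" by (rule mult_right_mono) (auto simp: L2_norm_nonneg)
    finally show "L2_norm_of M Zj (S b) \<le> max C 0 * L2_norm_of M V b" .
  qed
  then show ?thesis by (intro exI[of _ "max C 0"]) auto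
qed

lemma cs_S:
  assumes b: "L2_of M V MV b" and g: "L2_of M Zj MZ g"
  shows "integrable M (\<lambda>\<omega>. S b (Zj \<omega>) * g (Zj \<omega>))"
    "\<bar>\<integral>\<omega>. S b (Zj \<omega>) * g (Zj \<omega>) \<partial>M\<bar> \<le> L2_norm_of M Zj (S b) * L2_norm_of M Zj g"
proof -
  have Sb: "L2_of M Zj MZ (S b)" by (rule S_L2[OF b])
  have m1: "(\<lambda>\<omega>. S b (Zj \<omega>)) \<in> borel_measurable M"
    using Sb measurable_comp[OF Z_meas] unfolding L2_of_def by (auto simp: o_def)
  have m2: "(\<lambda>\<omega>. g (Zj \<omega>)) \<in> borel_measurable M"
    using g measurable_comp[OF Z_meas] unfolding L2_of_def by (auto simp: o_def)
  have i1: "integrable M (\<lambda>\<omega>. (S b (Zj \<omega>))\<^sup>2)" using Sb unfolding L2_of_def by simp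
  have i2: "integrable M (\<lambda>\<omega>. (g (Zj \<omega>))\<^sup>2)" using g unfolding L2_of_def by simp
  show "integrable M (\<lambda>\<omega>. S b (Zj \<omega>) * g (Zj \<omega>))" by (rule cs_real(1)[OF m1 m2 i1 i2])
  have "\<bar>\<integral>\<omega>. S b (Zj \<omega>) * g (Zj \<omega>) \<partial>M\<bar> \<le> sqrt (\<integral>\<omega>. (S b (Zj \<omega>))\<^sup>2 \<partial>M) * sqrt (\<integral>\<omega>. (g (Zj \<omega>))\<^sup>2 \<partial>M)"
    by (rule cs_real(2)[OF m1 m2 i1 i2])
  then show "\<bar>\<integral>\<omega>. S b (Zj \<omega>) * g (Zj \<omega>) \<partial>M\<bar> \<le> L2_norm_of M Zj (S b) * L2_norm_of M Zj g"
    unfolding L2_norm_of_def by simp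
qed

lemma stepB:
  fixes \<phi> :: "'v \<Rightarrow> real^'d" and g :: "'z \<Rightarrow> real"
  assumes C0: "C \<ge> 0" and C: "\<forall>b. L2_of M V MV b \<longrightarrow> L2_norm_of M Zj (S b) \<le> C * L2_norm_of M V b"
    and g: "L2_of M Zj MZ g" and \<phi>m: "\<phi> \<in> borel_measurable MV"
    and \<phi>: "AE \<omega> in M. \<forall>k. \<phi> (V \<omega>) $ k = cond_exp_given M V MV (\<lambda>\<omega>'. \<nu> (Y \<omega>') $ k * g (Zj \<omega>')) \<omega>"
  shows "L2_of M V MV \<phi>" "L2_norm_of M V \<phi> \<le> C * L2_norm_of M Zj g"
proof -
  interpret prob_space M by (rule prob)
  define G where "G = L2_norm_of M Zj g"
  have G0: "G \<ge> 0" unfolding G_def by (rule L2_norm_nonneg)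
  define f where "f n \<omega> = (if norm (\<phi> (V \<omega>)) \<le> real n then (norm (\<phi> (V \<omega>)))\<^sup>2 else 0)" for n \<omega>
  define bn where "bn n v = (if norm (\<phi> v) \<le> real n then \<phi> v else 0)" for n v
  have [measurable]: "(\<lambda>\<omega>. \<phi> (V \<omega>)) \<in> borel_measurable M"
    using measurable_comp[OF V_meas \<phi>m] by (simp add: o_def)
  have bnm: "bn n \<in> borel_measurable MV" for n
    unfolding bn_def using \<phi>m by measurable
  have bnb: "norm (bn n v) \<le> real n" for n v
    unfolding bn_def by auto
  have bnL2: "L2_of M V MV (bn n)" for n by (rule L2_bounded[OF prob V_meas bnm bnb])
  have fm [measurable]: "f n \<in> borel_measurable M" for n
    unfolding f_def by measurable
  have fpos: "0 \<le> f n \<omega>" for n \<omega> unfolding f_def by auto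
  have fb: "f n \<omega> \<le> (real n)\<^sup>2" for n \<omega>
    unfolding f_def by (auto intro!: power_mono)
  have f_int: "integrable M (f n)" for n
  proof (rule integrable_const_bound[where B="(real n)\<^sup>2"])
    show "AE x in M. norm (f n x) \<le> (real n)\<^sup>2" using fpos fb by auto
  qed (rule fm)
  have eqA: "(\<integral>\<omega>. S (bn n) (Zj \<omega>) * g (Zj \<omega>) \<partial>M) = integral\<^sup>L M (f n)" for n
  proof -
    have "(\<integral>\<omega>. S (bn n) (Zj \<omega>) * g (Zj \<omega>) \<partial>M) = (\<integral>\<omega>. bn n (V \<omega>) \<bullet> \<phi> (V \<omega>) \<partial>M)"
      by (rule stepA[OF bnL2 bnb g \<phi>m \<phi>])
    also have "\<dots> = integral\<^sup>L M (f n)"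
      by (rule Bochner_Integration.integral_cong[OF refl]) (simp add: bn_def f_def power2_norm_eq_inner)
    finally show ?thesis .
  qed
  have normbn: "L2_norm_of M V (bn n) = sqrt (integral\<^sup>L M (f n))" for n
    unfolding L2_norm_of_def
    by (rule arg_cong[where f=sqrt], rule Bochner_Integration.integral_cong[OF refl]) (simp add: bn_def f_def)
  have an_bound: "integral\<^sup>L M (f n) \<le> (C * G)\<^sup>2" for n
  proof -
    define x where "x = sqrt (integral\<^sup>L M (f n))"
    have ipos: "integral\<^sup>L M (f n) \<ge> 0" by (rule integral_nonneg_AE) (simp add: fpos)
    have x0: "x \<ge> 0" unfolding x_def using ipos by simp
    have xx: "integral\<^sup>L M (f n) = x\<^sup>2" unfolding x_def using ipos by simp
    have "integral\<^sup>L M (f n) \<le> \<bar>\<integral>\<omega>. S (bn n) (Zj \<omega>) * g (Zj \<omega>) \<partial>M\<bar>" using eqA[of n] by simp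
    also have "\<dots> \<le> L2_norm_of M Zj (S (bn n)) * G" unfolding G_def by (rule cs_S(2)[OF bnL2 g])
    also have "\<dots> \<le> (C * L2_norm_of M V (bn n)) * G"
      by (rule mult_right_mono) (use C bnL2 G0 in auto)
    finally have "x\<^sup>2 \<le> (C * G) * x" using xx normbn[of n] unfolding x_def by (simp add: algebra_simps)
    then have "x \<le> C * G \<or> x = 0" using x0 by (auto simp: power2_eq_square)
    then have "x\<^sup>2 \<le> (C * G)\<^sup>2" using x0 C0 G0 by (auto intro: power_mono)
    then show ?thesis using xx by simp
  qed
  have incf: "incseq (\<lambda>n. integral\<^sup>L M (f n))"
  proof (rule incseq_SucI)
    fix n
    show "integral\<^sup>L M (f n) \<le> integral\<^sup>L M (f (Suc n))"
      by (rule integral_mono[OF f_int f_int]) (auto simp: f_def)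
  qed
  have bdd: "bdd_above (range (\<lambda>n. integral\<^sup>L M (f n)))"
    by (rule bdd_aboveI[where M="(C * G)\<^sup>2"]) (use an_bound in auto)
  have ilim: "(\<lambda>n. integral\<^sup>L M (f n)) \<longlonglongrightarrow> (SUP n. integral\<^sup>L M (f n))"
    by (rule LIMSEQ_incseq_SUP[OF bdd incf])
  have mono: "AE \<omega> in M. mono (\<lambda>n. f n \<omega>)"
  proof (rule AE_I2)
    fix \<omega> show "mono (\<lambda>n. f n \<omega>)"
    proof (rule incseq_SucI)
      fix n show "f n \<omega> \<le> f (Suc n) \<omega>" unfolding f_def by auto
    qed
  qed
  have lim: "AE \<omega> in M. (\<lambda>n. f n \<omega>) \<longlonglongrightarrow> (norm (\<phi> (V \<omega>)))\<^sup>2"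
  proof (rule AE_I2)
    fix \<omega>
    obtain N where N: "norm (\<phi> (V \<omega>)) \<le> real N" using real_arch_simple by blast
    have "eventually (\<lambda>n. f n \<omega> = (norm (\<phi> (V \<omega>)))\<^sup>2) sequentially"
      unfolding eventually_sequentially
    proof (intro exI[of _ N] allI impI)
      fix n assume "N \<le> n"
      then have "norm (\<phi> (V \<omega>)) \<le> real n" using N by (meson of_nat_le_iff order_trans)
      then show "f n \<omega> = (norm (\<phi> (V \<omega>)))\<^sup>2" unfolding f_def by simp
    qed
    then show "(\<lambda>n. f n \<omega>) \<longlonglongrightarrow> (norm (\<phi> (V \<omega>)))\<^sup>2" by (rule tendsto_eventually)
  qed
  have um: "(\<lambda>\<omega>. (norm (\<phi> (V \<omega>)))\<^sup>2) \<in> borel_measurable M" by measurable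
  note MC = integral_monotone_convergence_nonneg[OF f_int mono _ lim ilim um]
  have uint: "integrable M (\<lambda>\<omega>. (norm (\<phi> (V \<omega>)))\<^sup>2)" by (rule MC(1)) (simp add: fpos)
  have uval: "(\<integral>\<omega>. (norm (\<phi> (V \<omega>)))\<^sup>2 \<partial>M) = (SUP n. integral\<^sup>L M (f n))" by (rule MC(2)) (simp add: fpos)
  have "(SUP n. integral\<^sup>L M (f n)) \<le> (C * G)\<^sup>2" by (rule cSUP_least) (auto simp: an_bound)
  then have "(\<integral>\<omega>. (norm (\<phi> (V \<omega>)))\<^sup>2 \<partial>M) \<le> (C * G)\<^sup>2" using uval by simp
  then have "sqrt (\<integral>\<omega>. (norm (\<phi> (V \<omega>)))\<^sup>2 \<partial>M) \<le> sqrt ((C * G)\<^sup>2)" by (rule real_sqrt_le_mono)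
  also have "\<dots> = C * G" using C0 G0 by simp
  finally show "L2_norm_of M V \<phi> \<le> C * L2_norm_of M Zj g" unfolding L2_norm_of_def G_def by simp
  show "L2_of M V MV \<phi>" unfolding L2_of_def using \<phi>m uint by simp
qed

end

context adjj
begin

lemma stepC:
  fixes \<phi> b :: "'v \<Rightarrow> real^'d" and g :: "'z \<Rightarrow> real"
  assumes C0: "C \<ge> 0" and C: "\<forall>b. L2_of M V MV b \<longrightarrow> L2_norm_of M Zj (S b) \<le> C * L2_norm_of M V b"
    and g: "L2_of M Zj MZ g" and \<phi>m: "\<phi> \<in> borel_measurable MV"
    and \<phi>: "AE \<omega> in M. \<forall>k. \<phi> (V \<omega>) $ k = cond_exp_given M V MV (\<lambda>\<omega>'. \<nu> (Y \<omega>') $ k * g (Zj \<omega>')) \<omega>"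
    and b: "L2_of M V MV b"
  shows "(\<integral>\<omega>. S b (Zj \<omega>) * g (Zj \<omega>) \<partial>M) = (\<integral>\<omega>. b (V \<omega>) \<bullet> \<phi> (V \<omega>) \<partial>M)"
proof -
  interpret prob_space M by (rule prob)
  have \<phi>L2: "L2_of M V MV \<phi>" by (rule stepB(1)[OF C0 C g \<phi>m \<phi>])
  define G where "G = L2_norm_of M Zj g"
  have G0: "G \<ge> 0" unfolding G_def by (rule L2_norm_nonneg)
  have bm: "b \<in> borel_measurable MV" and bi: "integrable M (\<lambda>\<omega>. (norm (b (V \<omega>)))\<^sup>2)"
    using b unfolding L2_of_def by auto
  have [measurable]: "(\<lambda>\<omega>. \<phi> (V \<omega>)) \<in> borel_measurable M"
    using measurable_comp[OF V_meas \<phi>m] by (simp add: o_def)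
  have [measurable]: "(\<lambda>\<omega>. b (V \<omega>)) \<in> borel_measurable M"
    using measurable_comp[OF V_meas bm] by (simp add: o_def)
  define bn where "bn n v = (if norm (b v) \<le> real n then b v else 0)" for n v
  define dn where "dn n = (\<lambda>v. (1::real) *\<^sub>R b v + (-1::real) *\<^sub>R bn n v)" for n
  have dn_eq: "dn n v = (if norm (b v) \<le> real n then 0 else b v)" for n v
    unfolding dn_def bn_def by simp
  have bnm: "bn n \<in> borel_measurable MV" for n
    unfolding bn_def using bm by measurable
  have bnb: "norm (bn n v) \<le> real n" for n v
    unfolding bn_def by auto
  have bnL2: "L2_of M V MV (bn n)" for n by (rule L2_bounded[OF prob V_meas bnm bnb])
  have dnm: "dn n \<in> borel_measurable MV" for n
  proof -
    have "(\<lambda>v. if norm (b v) \<le> real n then 0 else b v) \<in> borel_measurable MV" using bm by measurable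
    then show ?thesis using dn_eq by (simp add: fun_eq_iff[symmetric] dn_eq[abs_def])
  qed
  have dnVm [measurable]: "(\<lambda>\<omega>. dn n (V \<omega>)) \<in> borel_measurable M" for n
    using measurable_comp[OF V_meas dnm] by (simp add: o_def)
  have dnb: "norm (dn n v) \<le> norm (b v)" for n v unfolding dn_eq by auto
  have dnL2: "L2_of M V MV (dn n)" for n
    unfolding L2_of_def
  proof (intro conjI dnm)
    show "integrable M (\<lambda>\<omega>. (norm (dn n (V \<omega>)))\<^sup>2)"
    proof (rule Bochner_Integration.integrable_bound[OF bi])
      show "AE x in M. norm ((norm (dn n (V x)))\<^sup>2) \<le> norm ((norm (b (V x)))\<^sup>2)"
        using dnb by (auto intro!: power_mono)
    qed measurable
  qed
  define L where "L n = (\<integral>\<omega>. S (bn n) (Zj \<omega>) * g (Zj \<omega>) \<partial>M)" for n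
  define Lb where "Lb = (\<integral>\<omega>. S b (Zj \<omega>) * g (Zj \<omega>) \<partial>M)"
  define R where "R = (\<integral>\<omega>. b (V \<omega>) \<bullet> \<phi> (V \<omega>) \<partial>M)"
  have LR: "L n = (\<integral>\<omega>. bn n (V \<omega>) \<bullet> \<phi> (V \<omega>) \<partial>M)" for n
    unfolding L_def by (rule stepA[OF bnL2 bnb g \<phi>m \<phi>])
  have Rlim: "L \<longlonglongrightarrow> R"
    unfolding LR R_def
  proof (rule integral_dominated_convergence[where w="\<lambda>\<omega>. \<bar>b (V \<omega>) \<bullet> \<phi> (V \<omega>)\<bar>"])
    show "(\<lambda>\<omega>. b (V \<omega>) \<bullet> \<phi> (V \<omega>)) \<in> borel_measurable M" by measurable
    show "(\<lambda>\<omega>. bn i (V \<omega>) \<bullet> \<phi> (V \<omega>)) \<in> borel_measurable M" for i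
      using measurable_comp[OF V_meas bnm[of i]] by (simp add: o_def)
    show "integrable M (\<lambda>\<omega>. \<bar>b (V \<omega>) \<bullet> \<phi> (V \<omega>)\<bar>)"
      using L2_prod_int[OF b \<phi>L2 V_meas V_meas] by simp
    show "AE \<omega> in M. (\<lambda>i. bn i (V \<omega>) \<bullet> \<phi> (V \<omega>)) \<longlonglongrightarrow> b (V \<omega>) \<bullet> \<phi> (V \<omega>)"
    proof (rule AE_I2)
      fix \<omega>
      obtain N where N: "norm (b (V \<omega>)) \<le> real N" using real_arch_simple by blast
      have "eventually (\<lambda>n. bn n (V \<omega>) \<bullet> \<phi> (V \<omega>) = b (V \<omega>) \<bullet> \<phi> (V \<omega>)) sequentially"
        unfolding eventually_sequentially
      proof (intro exI[of _ N] allI impI)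
        fix n assume "N \<le> n"
        then have "norm (b (V \<omega>)) \<le> real n" using N by (meson of_nat_le_iff order_trans)
        then show "bn n (V \<omega>) \<bullet> \<phi> (V \<omega>) = b (V \<omega>) \<bullet> \<phi> (V \<omega>)" unfolding bn_def by simp
      qed
      then show "(\<lambda>n. bn n (V \<omega>) \<bullet> \<phi> (V \<omega>)) \<longlonglongrightarrow> b (V \<omega>) \<bullet> \<phi> (V \<omega>)" by (rule tendsto_eventually)
    qed
    show "AE \<omega> in M. norm (bn i (V \<omega>) \<bullet> \<phi> (V \<omega>)) \<le> \<bar>b (V \<omega>) \<bullet> \<phi> (V \<omega>)\<bar>" for i
      unfolding bn_def by auto
  qed
  define e where "e n = L2_norm_of M V (dn n)" for n
  have elim: "e \<longlonglongrightarrow> 0"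
  proof -
    have "(\<lambda>n. \<integral>\<omega>. (norm (dn n (V \<omega>)))\<^sup>2 \<partial>M) \<longlonglongrightarrow> (\<integral>\<omega>. 0 \<partial>M)"
    proof (rule integral_dominated_convergence[where w="\<lambda>\<omega>. (norm (b (V \<omega>)))\<^sup>2"])
      show "(\<lambda>\<omega>. 0::real) \<in> borel_measurable M" by simp
      show "(\<lambda>\<omega>. (norm (dn i (V \<omega>)))\<^sup>2) \<in> borel_measurable M" for i by measurable
      show "integrable M (\<lambda>\<omega>. (norm (b (V \<omega>)))\<^sup>2)" by (rule bi)
      show "AE \<omega> in M. (\<lambda>i. (norm (dn i (V \<omega>)))\<^sup>2) \<longlonglongrightarrow> 0"
      proof (rule AE_I2)
        fix \<omega>
        obtain N where N: "norm (b (V \<omega>)) \<le> real N" using real_arch_simple by blast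
        have "eventually (\<lambda>n. (norm (dn n (V \<omega>)))\<^sup>2 = 0) sequentially"
          unfolding eventually_sequentially
        proof (intro exI[of _ N] allI impI)
          fix n assume "N \<le> n"
          then have "norm (b (V \<omega>)) \<le> real n" using N by (meson of_nat_le_iff order_trans)
          then show "(norm (dn n (V \<omega>)))\<^sup>2 = 0" unfolding dn_eq by simp
        qed
        then show "(\<lambda>n. (norm (dn n (V \<omega>)))\<^sup>2) \<longlonglongrightarrow> 0" by (rule tendsto_eventually)
      qed
      show "AE \<omega> in M. norm ((norm (dn i (V \<omega>)))\<^sup>2) \<le> (norm (b (V \<omega>)))\<^sup>2" for i
        using dnb by (auto intro!: power_mono)
    qed
    then have "(\<lambda>n. sqrt (\<integral>\<omega>. (norm (dn n (V \<omega>)))\<^sup>2 \<partial>M)) \<longlonglongrightarrow> sqrt 0"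
      by (intro tendsto_real_sqrt) simp
    then show ?thesis unfolding e_def L2_norm_of_def by simp
  qed
  have diff_bound: "norm (Lb - L n) \<le> C * e n * G" for n
  proof -
    have lin: "AE \<omega> in M. S (dn n) (Zj \<omega>) = 1 * S b (Zj \<omega>) + (-1) * S (bn n) (Zj \<omega>)"
      using S_bl b bnL2[of n] unfolding bounded_linear_L2_def dn_def by blast
    have i1: "integrable M (\<lambda>\<omega>. S b (Zj \<omega>) * g (Zj \<omega>))" by (rule cs_S(1)[OF b g])
    have i2: "integrable M (\<lambda>\<omega>. S (bn n) (Zj \<omega>) * g (Zj \<omega>))" by (rule cs_S(1)[OF bnL2 g])
    have Sbm: "S b \<in> borel_measurable MZ" "S (bn n) \<in> borel_measurable MZ" "S (dn n) \<in> borel_measurable MZ"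
      "g \<in> borel_measurable MZ"
      using S_L2[OF b] S_L2[OF bnL2] S_L2[OF dnL2] g unfolding L2_of_def by auto
    have [measurable]: "(\<lambda>\<omega>. S b (Zj \<omega>)) \<in> borel_measurable M" "(\<lambda>\<omega>. S (bn n) (Zj \<omega>)) \<in> borel_measurable M"
      "(\<lambda>\<omega>. S (dn n) (Zj \<omega>)) \<in> borel_measurable M" "(\<lambda>\<omega>. g (Zj \<omega>)) \<in> borel_measurable M"
      using measurable_comp[OF Z_meas Sbm(1)] measurable_comp[OF Z_meas Sbm(2)]
        measurable_comp[OF Z_meas Sbm(3)] measurable_comp[OF Z_meas Sbm(4)] by (simp_all add: o_def)
    have "Lb - L n = (\<integral>\<omega>. S b (Zj \<omega>) * g (Zj \<omega>) - S (bn n) (Zj \<omega>) * g (Zj \<omega>) \<partial>M)"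
      unfolding Lb_def L_def by (rule Bochner_Integration.integral_diff[OF i1 i2, symmetric])
    also have "\<dots> = (\<integral>\<omega>. S (dn n) (Zj \<omega>) * g (Zj \<omega>) \<partial>M)"
    proof (rule integral_cong_AE)
      show "(\<lambda>\<omega>. S b (Zj \<omega>) * g (Zj \<omega>) - S (bn n) (Zj \<omega>) * g (Zj \<omega>)) \<in> borel_measurable M"
        by measurable
      show "(\<lambda>\<omega>. S (dn n) (Zj \<omega>) * g (Zj \<omega>)) \<in> borel_measurable M"
        by measurable
      show "AE \<omega> in M. S b (Zj \<omega>) * g (Zj \<omega>) - S (bn n) (Zj \<omega>) * g (Zj \<omega>) = S (dn n) (Zj \<omega>) * g (Zj \<omega>)"
        using lin
      proof eventually_elim
        fix \<omega> assume h: "S (dn n) (Zj \<omega>) = 1 * S b (Zj \<omega>) + (-1) * S (bn n) (Zj \<omega>)"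
        have h2: "S (dn n) (Zj \<omega>) = S b (Zj \<omega>) - S (bn n) (Zj \<omega>)" using h by linarith
        show "S b (Zj \<omega>) * g (Zj \<omega>) - S (bn n) (Zj \<omega>) * g (Zj \<omega>) = S (dn n) (Zj \<omega>) * g (Zj \<omega>)"
          by (simp only: h2 left_diff_distrib)
      qed
    qed
    finally have eq: "Lb - L n = (\<integral>\<omega>. S (dn n) (Zj \<omega>) * g (Zj \<omega>) \<partial>M)" .
    have "norm (Lb - L n) \<le> L2_norm_of M Zj (S (dn n)) * G"
      unfolding eq G_def using cs_S(2)[OF dnL2 g] by simp
    also have "\<dots> \<le> (C * e n) * G"
      unfolding e_def by (rule mult_right_mono) (use C dnL2 G0 in auto)
    finally show ?thesis .
  qed
  have "(\<lambda>n. C * e n * G) \<longlonglongrightarrow> C * 0 * G"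
    by (intro tendsto_mult tendsto_const elim)
  then have "(\<lambda>n. C * e n * G) \<longlonglongrightarrow> 0" by simp
  then have "(\<lambda>n. Lb - L n) \<longlonglongrightarrow> 0"
    by (rule Lim_null_comparison[rotated]) (use diff_bound in auto)
  then have "(\<lambda>n. Lb - (Lb - L n)) \<longlonglongrightarrow> Lb - 0"
    by (intro tendsto_diff tendsto_const)
  then have "L \<longlonglongrightarrow> Lb" by simp
  from LIMSEQ_unique[OF this Rlim] show ?thesis unfolding Lb_def R_def .
qed

end

lemma vec_meas:
  fixes h :: "'d::finite \<Rightarrow> 'b \<Rightarrow> real"
  assumes hm: "\<And>k. h k \<in> borel_measurable N"
  shows "(\<lambda>v. (\<chi> k. h k v) :: real^'d) \<in> borel_measurable N"
proof -
  have eq: "(\<lambda>v. (\<chi> k. h k v) :: real^'d) = (\<lambda>v. \<Sum>i\<in>UNIV. h i v *\<^sub>R (axis i 1 :: real^'d))"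
  proof
    fix v
    have "(\<chi> k. h k v) = (\<Sum>i\<in>UNIV. ((\<chi> k. h k v) :: real^'d) $ i *s axis i 1)"
      by (rule basis_expansion[symmetric])
    then show "(\<chi> k. h k v) = (\<Sum>i\<in>UNIV. h i v *\<^sub>R (axis i 1 :: real^'d))"
      by (simp add: scalar_mult_eq_scaleR)
  qed
  have "(\<lambda>v. \<Sum>i\<in>UNIV. h i v *\<^sub>R (axis i 1 :: real^'d)) \<in> borel_measurable N"
    using hm by (intro borel_measurable_sum borel_measurable_scaleR) auto
  then show ?thesis unfolding eq .
qed

lemma L2_add:
  fixes f h :: "'b \<Rightarrow> 'c::euclidean_space"
  assumes X: "X \<in> M \<rightarrow>\<^sub>M N" and f: "L2_of M X N f" and h: "L2_of M X N h"
  shows "L2_of M X N (\<lambda>v. f v + h v)"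
proof -
  have fm: "f \<in> borel_measurable N" and hm: "h \<in> borel_measurable N"
    and fi: "integrable M (\<lambda>\<omega>. (norm (f (X \<omega>)))\<^sup>2)" and hi: "integrable M (\<lambda>\<omega>. (norm (h (X \<omega>)))\<^sup>2)"
    using f h unfolding L2_of_def by auto
  have m: "(\<lambda>v. f v + h v) \<in> borel_measurable N" using fm hm by measurable
  have [measurable]: "(\<lambda>\<omega>. f (X \<omega>)) \<in> borel_measurable M" "(\<lambda>\<omega>. h (X \<omega>)) \<in> borel_measurable M"
    using measurable_comp[OF X fm] measurable_comp[OF X hm] by (simp_all add: o_def)
  have pt: "(norm (x + y))\<^sup>2 \<le> 3 * ((norm x)\<^sup>2 + (norm y)\<^sup>2)" for x y :: 'c
  proof -
    have "(norm (x + y))\<^sup>2 \<le> (norm x + norm y)\<^sup>2" by (rule power_mono) (auto intro: norm_triangle_ineq)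
    also have "\<dots> = (norm x)\<^sup>2 + 2 * (norm x * norm y) + (norm y)\<^sup>2" by (simp add: power2_sum)
    also have "\<dots> \<le> 3 * ((norm x)\<^sup>2 + (norm y)\<^sup>2)" using prod_le_sq[of "norm x" "norm y"] by simp
    finally show ?thesis .
  qed
  have "integrable M (\<lambda>\<omega>. (norm (f (X \<omega>) + h (X \<omega>)))\<^sup>2)"
  proof (rule Bochner_Integration.integrable_bound[OF integrable_mult_right[OF Bochner_Integration.integrable_add[OF fi hi], of 3]])
    show "AE x in M. norm ((norm (f (X x) + h (X x)))\<^sup>2) \<le> norm (3 * ((norm (f (X x)))\<^sup>2 + (norm (h (X x)))\<^sup>2))"
      using pt by simp
  qed measurable
  then show ?thesis unfolding L2_of_def using m by simp
qed

lemma L2_sum: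
  fixes f :: "nat \<Rightarrow> 'b \<Rightarrow> 'c::euclidean_space"
  assumes prob: "prob_space M" and X: "X \<in> M \<rightarrow>\<^sub>M N" and A: "finite A"
    and f: "\<And>j. j \<in> A \<Longrightarrow> L2_of M X N (f j)"
  shows "L2_of M X N (\<lambda>v. \<Sum>j\<in>A. f j v)"
  using A f
proof (induction A rule: finite_induct)
  case empty
  show ?case by simp (rule L2_bounded[OF prob X, where K=0], auto)
next
  case (insert a A)
  have "L2_of M X N (\<lambda>v. f a v + (\<Sum>j\<in>A. f j v))"
    by (rule L2_add[OF X]) (use insert in auto)
  then show ?case using insert by simp
qed

lemma sq_sum_le: "(\<Sum>j\<in>A. (a j::real))\<^sup>2 \<le> real (card A) * (\<Sum>j\<in>A. (a j)\<^sup>2)"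
  using Cauchy_Schwarz_ineq_sum[of "\<lambda>_. 1" a A] by simp

lemma norm_sum_sq:
  fixes x :: "nat \<Rightarrow> 'c::real_normed_vector"
  shows "(norm (\<Sum>j\<in>A. x j))\<^sup>2 \<le> real (card A) * (\<Sum>j\<in>A. (norm (x j))\<^sup>2)"
proof -
  have "(norm (\<Sum>j\<in>A. x j))\<^sup>2 \<le> (\<Sum>j\<in>A. norm (x j))\<^sup>2"
    by (rule power_mono[OF norm_sum]) simp
  also have "\<dots> \<le> real (card A) * (\<Sum>j\<in>A. (norm (x j))\<^sup>2)" by (rule sq_sum_le)
  finally show ?thesis .
qed

theorem proposition1:
  fixes M :: "'a measure"
    and Y :: "'a \<Rightarrow> 'y" and MY :: "'y measure"
    and V :: "'a \<Rightarrow> 'v" and MV :: "'v measure"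
    and Z :: "nat \<Rightarrow> 'a \<Rightarrow> 'z" and MZ :: "nat \<Rightarrow> 'z measure"
    and J :: nat
    and h :: "nat \<Rightarrow> ('v \<Rightarrow> real^'d) \<Rightarrow> ('z \<Rightarrow> real)"
    and \<eta>0 :: "'v \<Rightarrow> real^'d"
    and S :: "nat \<Rightarrow> ('v \<Rightarrow> real^'d) \<Rightarrow> ('z \<Rightarrow> real)"
    and \<nu> :: "nat \<Rightarrow> 'y \<Rightarrow> real^'d"
  assumes prob: "prob_space M"
    and Y_meas: "Y \<in> M \<rightarrow>\<^sub>M MY"
    and V_meas: "V \<in> M \<rightarrow>\<^sub>M MV"
    and Z_meas: "\<And>j. j < J \<Longrightarrow> Z j \<in> M \<rightarrow>\<^sub>M MZ j"
    and \<eta>0_B: "L2_of M V MV \<eta>0"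
    \<comment> \<open>(i) h_j maps B into L^2(Z_j) and is Frechet differentiable in a neighbourhood of eta0,
        with derivative S^(j) at eta0\<close>
    and h_L2: "\<And>j \<eta>. j < J \<Longrightarrow> L2_of M V MV \<eta> \<Longrightarrow> L2_of M (Z j) (MZ j) (h j \<eta>)"
    and diff_nbhd: "\<And>j. j < J \<Longrightarrow> \<exists>r>0. \<forall>\<eta>. L2_of M V MV \<eta> \<longrightarrow>
              L2_norm_of M V (\<lambda>v. \<eta> v - \<eta>0 v) < r \<longrightarrow>
              (\<exists>D. frechet_L2 M V MV (Z j) (MZ j) (h j) \<eta> D)"
    and diff_eta0: "\<And>j. j < J \<Longrightarrow> frechet_L2 M V MV (Z j) (MZ j) (h j) \<eta>0 (S j)"
    \<comment> \<open>(ii) [S^(j) b](Z_j) = E[ b(V)' nu_j(Y) | Z_j ]\<close>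
    and \<nu>_meas: "\<And>j. j < J \<Longrightarrow> \<nu> j \<in> borel_measurable MY"
    and \<nu>_b_int: "\<And>j b. j < J \<Longrightarrow> L2_of M V MV b \<Longrightarrow>
              integrable M (\<lambda>\<omega>. b (V \<omega>) \<bullet> \<nu> j (Y \<omega>))"
    and \<nu>_g_int: "\<And>j g k. j < J \<Longrightarrow> L2_of M (Z j) (MZ j) g \<Longrightarrow>
              integrable M (\<lambda>\<omega>. \<nu> j (Y \<omega>) $ k * g (Z j \<omega>))"
    and S_cond: "\<And>j b. j < J \<Longrightarrow> L2_of M V MV b \<Longrightarrow>
              AE \<omega> in M. S j b (Z j \<omega>) =
                 cond_exp_given M (Z j) (MZ j) (\<lambda>\<omega>'. b (V \<omega>') \<bullet> \<nu> j (Y \<omega>')) \<omega>"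
  shows "\<exists>Sstar :: (nat \<Rightarrow> 'z \<Rightarrow> real) \<Rightarrow> ('v \<Rightarrow> real^'d).
     \<comment> \<open>S* maps L^2(Z) into B\<close>
     (\<forall>g. (\<forall>j<J. L2_of M (Z j) (MZ j) (g j)) \<longrightarrow> L2_of M V MV (Sstar g)) \<and>
     \<comment> \<open>adjoint: <S b, g>_{L^2(Z)} = <b, S* g>_B\<close>
     (\<forall>g b. (\<forall>j<J. L2_of M (Z j) (MZ j) (g j)) \<longrightarrow> L2_of M V MV b \<longrightarrow>
        (\<Sum>j<J. \<integral>\<omega>. S j b (Z j \<omega>) * g j (Z j \<omega>) \<partial>M) = (\<integral>\<omega>. b (V \<omega>) \<bullet> Sstar g (V \<omega>) \<partial>M)) \<and>
     \<comment> \<open>linear\<close>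
     (\<forall>g1 g2 (a::real) c. (\<forall>j<J. L2_of M (Z j) (MZ j) (g1 j)) \<longrightarrow> (\<forall>j<J. L2_of M (Z j) (MZ j) (g2 j)) \<longrightarrow>
        (AE \<omega> in M. Sstar (\<lambda>j z. a * g1 j z + c * g2 j z) (V \<omega>)
                      = a *\<^sub>R Sstar g1 (V \<omega>) + c *\<^sub>R Sstar g2 (V \<omega>))) \<and>
     \<comment> \<open>continuous (bounded)\<close>
     (\<exists>C. \<forall>g. (\<forall>j<J. L2_of M (Z j) (MZ j) (g j)) \<longrightarrow>
        L2_norm_of M V (Sstar g) \<le> C * sqrt (\<Sum>j<J. (L2_norm_of M (Z j) (g j))\<^sup>2)) \<and>
     \<comment> \<open>formula: [S* g](V) = sum_j E[nu_j(Y) g_j(Z_j) | V]\<close>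
     (\<forall>g. (\<forall>j<J. L2_of M (Z j) (MZ j) (g j)) \<longrightarrow>
        (AE \<omega> in M. \<forall>k. Sstar g (V \<omega>) $ k =
            (\<Sum>j<J. cond_exp_given M V MV (\<lambda>\<omega>'. \<nu> j (Y \<omega>') $ k * g j (Z j \<omega>')) \<omega>)))"
proof -
  interpret P: prob_space M by (rule prob)
  have Vsp: "V \<in> space M \<rightarrow> space MV" using measurable_space[OF V_meas] by blast
  have adj: "adjj M Y MY V MV (Z j) (MZ j) (S j) (\<nu> j)" if j: "j < J" for j
  proof -
    have "bounded_linear_L2 M V MV (Z j) (MZ j) (S j)" using diff_eta0[OF j] unfolding frechet_L2_def by blast
    then show ?thesis
      by (rule adjj.intro[OF prob Y_meas V_meas Z_meas[OF j] _ \<nu>_meas[OF j] \<nu>_b_int[OF j] \<nu>_g_int[OF j] S_cond[OF j]])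
  qed
  have "\<forall>j. \<exists>C. j < J \<longrightarrow> (C \<ge> 0 \<and> (\<forall>b::'v \<Rightarrow> real^'d. L2_of M V MV b \<longrightarrow> L2_norm_of M (Z j) (S j b) \<le> C * L2_norm_of M V b))"
  proof
    fix j show "\<exists>C. j < J \<longrightarrow> (C \<ge> 0 \<and> (\<forall>b::'v \<Rightarrow> real^'d. L2_of M V MV b \<longrightarrow> L2_norm_of M (Z j) (S j b) \<le> C * L2_norm_of M V b))"
    proof (cases "j < J")
      case True
      then show ?thesis using adjj.S_bound[OF adj[OF True]] by blast
    qed auto
  qed
  from choice[OF this] obtain Cf where Cf: "\<And>j. j < J \<Longrightarrow> Cf j \<ge> 0 \<and> (\<forall>b::'v \<Rightarrow> real^'d. L2_of M V MV b \<longrightarrow> L2_norm_of M (Z j) (S j b) \<le> Cf j * L2_norm_of M V b)"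
    by blast
  have Cf0: "\<And>j. j < J \<Longrightarrow> Cf j \<ge> 0" and Cf1: "\<And>j. j < J \<Longrightarrow> \<forall>b::'v \<Rightarrow> real^'d. L2_of M V MV b \<longrightarrow> L2_norm_of M (Z j) (S j b) \<le> Cf j * L2_norm_of M V b"
    using Cf by blast+
  define fac where "fac f = (SOME \<phi>. \<phi> \<in> borel_measurable MV \<and> (\<forall>\<omega>\<in>space M. f \<omega> = \<phi> (V \<omega>)))" for f :: "'a \<Rightarrow> real"
  have fac: "fac f \<in> borel_measurable MV \<and> (\<forall>\<omega>\<in>space M. f \<omega> = fac f (V \<omega>))"
    if fm: "f \<in> borel_measurable (sigma_gen M V MV)" for f
  proof -
    have "\<exists>\<phi>\<in>borel_measurable MV. \<forall>\<omega>\<in>space M. f \<omega> = \<phi> (V \<omega>)"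
      by (rule factor_real[OF fm[unfolded sigma_gen_def] Vsp])
    then have "\<exists>\<phi>. \<phi> \<in> borel_measurable MV \<and> (\<forall>\<omega>\<in>space M. f \<omega> = \<phi> (V \<omega>))" by blast
    then show ?thesis unfolding fac_def by (rule someI_ex)
  qed
  define ce where "ce g j k = cond_exp_given M V MV (\<lambda>\<omega>'. \<nu> j (Y \<omega>') $ k * g j (Z j \<omega>'))"
    for g :: "nat \<Rightarrow> 'z \<Rightarrow> real" and j k
  have ce_m: "ce g j k \<in> borel_measurable (sigma_gen M V MV)" for g j k
    unfolding ce_def cond_exp_given_def by (rule borel_measurable_cond_exp)
  define \<Phi> where "\<Phi> g j = (\<lambda>v. (\<chi> k. fac (ce g j k) v) :: real^'d)" for g j
  have \<Phi>m: "\<Phi> g j \<in> borel_measurable MV" for g j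
    unfolding \<Phi>_def by (rule vec_meas) (use fac[OF ce_m] in blast)
  have \<Phi>eq: "\<Phi> g j (V \<omega>) $ k = ce g j k \<omega>" if "\<omega> \<in> space M" for g j k \<omega>
    unfolding \<Phi>_def using fac[OF ce_m, of g j k] that by simp
  have \<Phi>AE: "AE \<omega> in M. \<forall>k. \<Phi> g j (V \<omega>) $ k = cond_exp_given M V MV (\<lambda>\<omega>'. \<nu> j (Y \<omega>') $ k * g j (Z j \<omega>')) \<omega>" for g j
    by (rule AE_I2) (simp add: \<Phi>eq ce_def)
  have \<Phi>L2: "L2_of M V MV (\<Phi> g j)" if "j < J" "L2_of M (Z j) (MZ j) (g j)" for g j
    by (rule adjj.stepB(1)[OF adj[OF that(1)] Cf0[OF that(1)] Cf1[OF that(1)] that(2) \<Phi>m[of g j] \<Phi>AE[of g j]])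
  have \<Phi>norm: "L2_norm_of M V (\<Phi> g j) \<le> Cf j * L2_norm_of M (Z j) (g j)"
    if "j < J" "L2_of M (Z j) (MZ j) (g j)" for g j
    by (rule adjj.stepB(2)[OF adj[OF that(1)] Cf0[OF that(1)] Cf1[OF that(1)] that(2) \<Phi>m[of g j] \<Phi>AE[of g j]])
  have \<Phi>adj: "(\<integral>\<omega>. S j b (Z j \<omega>) * g j (Z j \<omega>) \<partial>M) = (\<integral>\<omega>. b (V \<omega>) \<bullet> \<Phi> g j (V \<omega>) \<partial>M)"
    if "j < J" "L2_of M (Z j) (MZ j) (g j)" "L2_of M V MV b" for g j b
    by (rule adjj.stepC[OF adj[OF that(1)] Cf0[OF that(1)] Cf1[OF that(1)] that(2) \<Phi>m[of g j] \<Phi>AE[of g j] that(3)])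
  define Sstar where "Sstar g = (\<lambda>v. \<Sum>j<J. \<Phi> g j v)" for g

  have h1: "\<forall>g. (\<forall>j<J. L2_of M (Z j) (MZ j) (g j)) \<longrightarrow> L2_of M V MV (Sstar g)"
  proof (intro allI impI)
    fix g :: "nat \<Rightarrow> 'z \<Rightarrow> real" assume g: "\<forall>j<J. L2_of M (Z j) (MZ j) (g j)"
    show "L2_of M V MV (Sstar g)" unfolding Sstar_def
      by (rule L2_sum[OF prob V_meas]) (use \<Phi>L2 g in auto)
  qed
  have h2: "\<forall>g b. (\<forall>j<J. L2_of M (Z j) (MZ j) (g j)) \<longrightarrow> L2_of M V MV b \<longrightarrow>
        (\<Sum>j<J. \<integral>\<omega>. S j b (Z j \<omega>) * g j (Z j \<omega>) \<partial>M) = (\<integral>\<omega>. b (V \<omega>) \<bullet> Sstar g (V \<omega>) \<partial>M)"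
  proof (intro allI impI)
    fix g :: "nat \<Rightarrow> 'z \<Rightarrow> real" and b :: "'v \<Rightarrow> real^'d"
    assume g: "\<forall>j<J. L2_of M (Z j) (MZ j) (g j)" and b: "L2_of M V MV b"
    have "(\<Sum>j<J. \<integral>\<omega>. S j b (Z j \<omega>) * g j (Z j \<omega>) \<partial>M) = (\<Sum>j<J. \<integral>\<omega>. b (V \<omega>) \<bullet> \<Phi> g j (V \<omega>) \<partial>M)"
      by (rule sum.cong[OF refl]) (use \<Phi>adj g b in auto)
    also have "\<dots> = (\<integral>\<omega>. (\<Sum>j<J. b (V \<omega>) \<bullet> \<Phi> g j (V \<omega>)) \<partial>M)"
      by (rule Bochner_Integration.integral_sum[symmetric])
         (use L2_prod_int[OF b \<Phi>L2 V_meas V_meas] g in auto)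
    also have "\<dots> = (\<integral>\<omega>. b (V \<omega>) \<bullet> Sstar g (V \<omega>) \<partial>M)"
      unfolding Sstar_def by (simp add: inner_sum_right)
    finally show "(\<Sum>j<J. \<integral>\<omega>. S j b (Z j \<omega>) * g j (Z j \<omega>) \<partial>M) = (\<integral>\<omega>. b (V \<omega>) \<bullet> Sstar g (V \<omega>) \<partial>M)" .
  qed
  have h3: "\<forall>g1 g2 (a::real) c. (\<forall>j<J. L2_of M (Z j) (MZ j) (g1 j)) \<longrightarrow> (\<forall>j<J. L2_of M (Z j) (MZ j) (g2 j)) \<longrightarrow>
        (AE \<omega> in M. Sstar (\<lambda>j z. a * g1 j z + c * g2 j z) (V \<omega>)
                      = a *\<^sub>R Sstar g1 (V \<omega>) + c *\<^sub>R Sstar g2 (V \<omega>))"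
  proof (intro allI impI)
    fix g1 g2 :: "nat \<Rightarrow> 'z \<Rightarrow> real" and a c :: real
    assume g1: "\<forall>j<J. L2_of M (Z j) (MZ j) (g1 j)" and g2: "\<forall>j<J. L2_of M (Z j) (MZ j) (g2 j)"
    define g3 where "g3 = (\<lambda>j z. a * g1 j z + c * g2 j z)"
    interpret FV: sigma_finite_subalgebra M "sigma_gen M V MV" by (rule sf_sub[OF prob V_meas])
    have ceAE: "AE \<omega> in M. ce g3 j k \<omega> = a * ce g1 j k \<omega> + c * ce g2 j k \<omega>" if j: "j < J" for j k
    proof -
      define f1 where "f1 = (\<lambda>\<omega>. \<nu> j (Y \<omega>) $ k * g1 j (Z j \<omega>))"
      define f2 where "f2 = (\<lambda>\<omega>. \<nu> j (Y \<omega>) $ k * g2 j (Z j \<omega>))"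
      have i1: "integrable M f1" unfolding f1_def using \<nu>_g_int[OF j] g1 j by blast
      have i2: "integrable M f2" unfolding f2_def using \<nu>_g_int[OF j] g2 j by blast
      have eq: "(\<lambda>\<omega>'. \<nu> j (Y \<omega>') $ k * g3 j (Z j \<omega>')) = (\<lambda>\<omega>. a * f1 \<omega> + c * f2 \<omega>)"
        unfolding g3_def f1_def f2_def by (simp add: fun_eq_iff algebra_simps)
      have A1: "AE \<omega> in M. real_cond_exp M (sigma_gen M V MV) (\<lambda>\<omega>. a * f1 \<omega> + c * f2 \<omega>) \<omega>
           = real_cond_exp M (sigma_gen M V MV) (\<lambda>\<omega>. a * f1 \<omega>) \<omega> + real_cond_exp M (sigma_gen M V MV) (\<lambda>\<omega>. c * f2 \<omega>) \<omega>"
        by (rule FV.real_cond_exp_add) (use i1 i2 in auto)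
      have A2: "AE \<omega> in M. real_cond_exp M (sigma_gen M V MV) (\<lambda>\<omega>. a * f1 \<omega>) \<omega> = a * real_cond_exp M (sigma_gen M V MV) f1 \<omega>"
        by (rule FV.real_cond_exp_cmult[OF i1])
      have A3: "AE \<omega> in M. real_cond_exp M (sigma_gen M V MV) (\<lambda>\<omega>. c * f2 \<omega>) \<omega> = c * real_cond_exp M (sigma_gen M V MV) f2 \<omega>"
        by (rule FV.real_cond_exp_cmult[OF i2])
      show ?thesis using A1 A2 A3
        unfolding ce_def cond_exp_given_def eq f1_def[symmetric] f2_def[symmetric]
        by eventually_elim simp
    qed
    have "AE \<omega> in M. \<forall>p\<in>{..<J} \<times> UNIV. ce g3 (fst p) (snd p) \<omega> = a * ce g1 (fst p) (snd p) \<omega> + c * ce g2 (fst p) (snd p) \<omega>"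
    proof (rule eventually_ball_finite)
      show "finite ({..<J} \<times> (UNIV :: 'd set))" by simp
      show "\<forall>p\<in>{..<J} \<times> UNIV. AE \<omega> in M. ce g3 (fst p) (snd p) \<omega> = a * ce g1 (fst p) (snd p) \<omega> + c * ce g2 (fst p) (snd p) \<omega>"
        using ceAE by auto
    qed
    then have "AE \<omega> in M. Sstar g3 (V \<omega>) = a *\<^sub>R Sstar g1 (V \<omega>) + c *\<^sub>R Sstar g2 (V \<omega>)"
      using AE_space
    proof eventually_elim
      case (elim \<omega>)
      have e: "ce g3 j k \<omega> = a * ce g1 j k \<omega> + c * ce g2 j k \<omega>" if "j < J" for j k
        using elim(1) that by auto
      show ?case
      proof (subst vec_eq_iff, intro allI)
        fix k
        have "Sstar g3 (V \<omega>) $ k = (\<Sum>j<J. ce g3 j k \<omega>)"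
          unfolding Sstar_def using \<Phi>eq[OF elim(2)] by simp
        also have "\<dots> = (\<Sum>j<J. a * ce g1 j k \<omega> + c * ce g2 j k \<omega>)"
          by (rule sum.cong[OF refl]) (use e in simp)
        also have "\<dots> = a * (\<Sum>j<J. ce g1 j k \<omega>) + c * (\<Sum>j<J. ce g2 j k \<omega>)"
          by (simp add: sum.distrib sum_distrib_left)
        also have "\<dots> = (a *\<^sub>R Sstar g1 (V \<omega>) + c *\<^sub>R Sstar g2 (V \<omega>)) $ k"
          unfolding Sstar_def using \<Phi>eq[OF elim(2)] by simp
        finally show "Sstar g3 (V \<omega>) $ k = (a *\<^sub>R Sstar g1 (V \<omega>) + c *\<^sub>R Sstar g2 (V \<omega>)) $ k" .
      qed
    qed
    then show "AE \<omega> in M. Sstar (\<lambda>j z. a * g1 j z + c * g2 j z) (V \<omega>) = a *\<^sub>R Sstar g1 (V \<omega>) + c *\<^sub>R Sstar g2 (V \<omega>)"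
      unfolding g3_def .
  qed
  have h4: "\<exists>C. \<forall>g. (\<forall>j<J. L2_of M (Z j) (MZ j) (g j)) \<longrightarrow>
        L2_norm_of M V (Sstar g) \<le> C * sqrt (\<Sum>j<J. (L2_norm_of M (Z j) (g j))\<^sup>2)"
  proof (intro exI[of _ "sqrt (real J * (\<Sum>j<J. (Cf j)\<^sup>2))"] allI impI)
    fix g :: "nat \<Rightarrow> 'z \<Rightarrow> real" assume g: "\<forall>j<J. L2_of M (Z j) (MZ j) (g j)"
    define Q where "Q = (\<Sum>j<J. (L2_norm_of M (Z j) (g j))\<^sup>2)"
    have SL2: "L2_of M V MV (Sstar g)" using h1 g by blast
    have intS: "integrable M (\<lambda>\<omega>. (norm (Sstar g (V \<omega>)))\<^sup>2)" using SL2 unfolding L2_of_def by blast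
    have int\<Phi>: "integrable M (\<lambda>\<omega>. (norm (\<Phi> g j (V \<omega>)))\<^sup>2)" if "j < J" for j
      using \<Phi>L2[OF that] g that unfolding L2_of_def by blast
    have sq: "(\<integral>\<omega>. (norm (\<Phi> g j (V \<omega>)))\<^sup>2 \<partial>M) = (L2_norm_of M V (\<Phi> g j))\<^sup>2" for j
    proof -
      have "0 \<le> (\<integral>\<omega>. (norm (\<Phi> g j (V \<omega>)))\<^sup>2 \<partial>M)" by (rule integral_nonneg_AE) simp
      then show ?thesis unfolding L2_norm_of_def by simp
    qed
    have \<Phi>n2: "(L2_norm_of M V (\<Phi> g j))\<^sup>2 \<le> (Cf j)\<^sup>2 * (L2_norm_of M (Z j) (g j))\<^sup>2" if j: "j < J" for j
    proof -
      have "(L2_norm_of M V (\<Phi> g j))\<^sup>2 \<le> (Cf j * L2_norm_of M (Z j) (g j))\<^sup>2"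
        by (rule power_mono[OF \<Phi>norm[OF j]]) (use g j in \<open>auto simp: L2_norm_nonneg\<close>)
      then show ?thesis by (simp add: power_mult_distrib)
    qed
    have Qj: "(L2_norm_of M (Z j) (g j))\<^sup>2 \<le> Q" if "j < J" for j
      unfolding Q_def by (rule member_le_sum) (use that in auto)
    have "(\<integral>\<omega>. (norm (Sstar g (V \<omega>)))\<^sup>2 \<partial>M) \<le> (\<integral>\<omega>. real J * (\<Sum>j<J. (norm (\<Phi> g j (V \<omega>)))\<^sup>2) \<partial>M)"
    proof (rule integral_mono[OF intS])
      show "integrable M (\<lambda>\<omega>. real J * (\<Sum>j<J. (norm (\<Phi> g j (V \<omega>)))\<^sup>2))"
        using int\<Phi> by auto
      show "(norm (Sstar g (V \<omega>)))\<^sup>2 \<le> real J * (\<Sum>j<J. (norm (\<Phi> g j (V \<omega>)))\<^sup>2)" for \<omega>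
        unfolding Sstar_def using norm_sum_sq[of "\<lambda>j. \<Phi> g j (V \<omega>)" "{..<J}"] by simp
    qed
    also have "\<dots> = real J * (\<Sum>j<J. (\<integral>\<omega>. (norm (\<Phi> g j (V \<omega>)))\<^sup>2 \<partial>M))"
      using int\<Phi> by (simp add: Bochner_Integration.integral_sum)
    also have "\<dots> \<le> real J * (\<Sum>j<J. (Cf j)\<^sup>2 * Q)"
    proof (rule mult_left_mono[OF sum_mono])
      fix j assume "j \<in> {..<J}"
      then have j: "j < J" by simp
      have "(\<integral>\<omega>. (norm (\<Phi> g j (V \<omega>)))\<^sup>2 \<partial>M) \<le> (Cf j)\<^sup>2 * (L2_norm_of M (Z j) (g j))\<^sup>2"
        using sq[of j] \<Phi>n2[OF j] by simp
      also have "\<dots> \<le> (Cf j)\<^sup>2 * Q" by (rule mult_left_mono[OF Qj[OF j]]) simp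
      finally show "(\<integral>\<omega>. (norm (\<Phi> g j (V \<omega>)))\<^sup>2 \<partial>M) \<le> (Cf j)\<^sup>2 * Q" .
    qed simp
    also have "\<dots> = real J * (\<Sum>j<J. (Cf j)\<^sup>2) * Q" by (simp add: sum_distrib_right)
    finally have I: "(\<integral>\<omega>. (norm (Sstar g (V \<omega>)))\<^sup>2 \<partial>M) \<le> real J * (\<Sum>j<J. (Cf j)\<^sup>2) * Q" .
    have "L2_norm_of M V (Sstar g) \<le> sqrt (real J * (\<Sum>j<J. (Cf j)\<^sup>2) * Q)"
      unfolding L2_norm_of_def using I by (rule real_sqrt_le_mono)
    also have "\<dots> = sqrt (real J * (\<Sum>j<J. (Cf j)\<^sup>2)) * sqrt Q" by (simp add: real_sqrt_mult)
    finally show "L2_norm_of M V (Sstar g) \<le> sqrt (real J * (\<Sum>j<J. (Cf j)\<^sup>2)) * sqrt (\<Sum>j<J. (L2_norm_of M (Z j) (g j))\<^sup>2)"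
      unfolding Q_def .
  qed
  have h5: "\<forall>g. (\<forall>j<J. L2_of M (Z j) (MZ j) (g j)) \<longrightarrow>
        (AE \<omega> in M. \<forall>k. Sstar g (V \<omega>) $ k =
            (\<Sum>j<J. cond_exp_given M V MV (\<lambda>\<omega>'. \<nu> j (Y \<omega>') $ k * g j (Z j \<omega>')) \<omega>))"
  proof (intro allI impI)
    fix g :: "nat \<Rightarrow> 'z \<Rightarrow> real"
    show "AE \<omega> in M. \<forall>k. Sstar g (V \<omega>) $ k = (\<Sum>j<J. cond_exp_given M V MV (\<lambda>\<omega>'. \<nu> j (Y \<omega>') $ k * g j (Z j \<omega>')) \<omega>)"
    proof (rule AE_I2)
      fix \<omega> assume "\<omega> \<in> space M"
      then show "\<forall>k. Sstar g (V \<omega>) $ k = (\<Sum>j<J. cond_exp_given M V MV (\<lambda>\<omega>'. \<nu> j (Y \<omega>') $ k * g j (Z j \<omega>')) \<omega>)"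
        unfolding Sstar_def by (simp add: \<Phi>eq ce_def)
    qed
  qed
  show ?thesis
    by (rule exI[of _ Sstar], intro conjI, fact h1, fact h2, fact h3, fact h4, fact h5)
qed

end
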